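(* In any medium with $n$ states, the number $m$ of effective transitions, i.e. the number of pairs $(S,t)$ with $S$ a state, $t$ a token and $St\neq S$, satisfies $m\le n\log_2 n$.
   Context: A medium consists of a finite set of states and a set of tokens, each token $t$ acting as a function on states, written $S\mapsto St$. Tokens concatenate into messages (words); $Sw$ denotes the state obtained by applying the tokens of $w$ successively to $S$. A token $t$ has a reverse $\tilde t$ if for any two distinct states $S\neq Q$, $St=Q$ iff $Q\tilde t=S$. A message is inconsistent if it contains some token together with its reverse, and consistent otherwise. A message $w$ is vacuous if for each token $t$ it contains equally many copies of $t$ and $\tilde t$. A token $t$ is effective for $S$ if $St\neq S$; a message is stepwise effective for $S$ if each successive token is effective for the state it is applied to. The axioms of a medium are: (1) each token has a unique reverse; (2) for any two distinct states $S,Q$ there is a consistent message $w$ with $Sw=Q$; (3) if $w$ is stepwise effective for $S$, then $Sw=S$ iff $w$ is vacuous; (4) if $Sw=Qz$, $w$ is stepwise effective for $S$, $z$ is stepwise effective for $Q$, and both $w,z$ are consistent, then the concatenation $wz$ is consistent. *)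

theory Defs
  imports Complex_Main
begin

definition is_reverse :: "'a set \<Rightarrow> ('a \<Rightarrow> 'b \<Rightarrow> 'a) \<Rightarrow> 'b \<Rightarrow> 'b \<Rightarrow> bool" where
  "is_reverse St act t r \<longleftrightarrow>
     (\<forall>P\<in>St. \<forall>Q\<in>St. P \<noteq> Q \<longrightarrow> (act P t = Q \<longleftrightarrow> act Q r = P))"

definition tok_rev :: "'a set \<Rightarrow> 'b set \<Rightarrow> ('a \<Rightarrow> 'b \<Rightarrow> 'a) \<Rightarrow> 'b \<Rightarrow> 'b" where
  "tok_rev St T act t = (THE r. r \<in> T \<and> is_reverse St act t r)"

definition apply_msg :: "('a \<Rightarrow> 'b \<Rightarrow> 'a) \<Rightarrow> 'a \<Rightarrow> 'b list \<Rightarrow> 'a" where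
  "apply_msg act P w = foldl act P w"

definition consistent_msg :: "'a set \<Rightarrow> 'b set \<Rightarrow> ('a \<Rightarrow> 'b \<Rightarrow> 'a) \<Rightarrow> 'b list \<Rightarrow> bool" where
  "consistent_msg St T act w \<longleftrightarrow> \<not> (\<exists>t\<in>set w. tok_rev St T act t \<in> set w)"

definition vacuous_msg :: "'a set \<Rightarrow> 'b set \<Rightarrow> ('a \<Rightarrow> 'b \<Rightarrow> 'a) \<Rightarrow> 'b list \<Rightarrow> bool" where
  "vacuous_msg St T act w \<longleftrightarrow>
     (\<forall>t\<in>T. count_list w t = count_list w (tok_rev St T act t))"

fun stepwise_effective :: "('a \<Rightarrow> 'b \<Rightarrow> 'a) \<Rightarrow> 'a \<Rightarrow> 'b list \<Rightarrow> bool" where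
  "stepwise_effective act P [] = True"
| "stepwise_effective act P (t # w) = (act P t \<noteq> P \<and> stepwise_effective act (act P t) w)"

definition medium :: "'a set \<Rightarrow> 'b set \<Rightarrow> ('a \<Rightarrow> 'b \<Rightarrow> 'a) \<Rightarrow> bool" where
  "medium St T act \<longleftrightarrow>
     finite St \<and>
     (\<forall>P\<in>St. \<forall>t\<in>T. act P t \<in> St) \<and>
     \<comment> \<open>(1) each token has a unique reverse\<close>
     (\<forall>t\<in>T. \<exists>!r. r \<in> T \<and> is_reverse St act t r) \<and>
     \<comment> \<open>(2) any two distinct states are joined by a consistent message\<close>
     (\<forall>P\<in>St. \<forall>Q\<in>St. P \<noteq> Q \<longrightarrow>
        (\<exists>w. set w \<subseteq> T \<and> consistent_msg St T act w \<and> apply_msg act P w = Q)) \<and>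
     \<comment> \<open>(3) stepwise effective messages return iff vacuous\<close>
     (\<forall>P\<in>St. \<forall>w. set w \<subseteq> T \<longrightarrow> stepwise_effective act P w \<longrightarrow>
        (apply_msg act P w = P \<longleftrightarrow> vacuous_msg St T act w)) \<and>
     \<comment> \<open>(4)\<close>
     (\<forall>P\<in>St. \<forall>Q\<in>St. \<forall>w z. set w \<subseteq> T \<longrightarrow> set z \<subseteq> T \<longrightarrow>
        apply_msg act P w = apply_msg act Q z \<longrightarrow>
        stepwise_effective act P w \<longrightarrow> stepwise_effective act Q z \<longrightarrow>
        consistent_msg St T act w \<longrightarrow> consistent_msg St T act z \<longrightarrow>
        consistent_msg St T act (w @ z))"

definition effective_transitions :: "'a set \<Rightarrow> 'b set \<Rightarrow> ('a \<Rightarrow> 'b \<Rightarrow> 'a) \<Rightarrow> ('a \<times> 'b) set" where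
  "effective_transitions St T act = {(P, t). P \<in> St \<and> t \<in> T \<and> act P t \<noteq> P}"

end

theory Submission
  imports Defs "HOL-Analysis.Convex"
begin


lemma two_powr_le: fixes y :: real assumes "0 \<le> y" "y \<le> 1" shows "2 powr y \<le> 1 + y"
proof -
  have "exp ((1 - y) *\<^sub>R 0 + y *\<^sub>R ln 2) \<le> (1 - y) * exp 0 + y * exp (ln 2)"
    using convex_onD[OF exp_convex, of y 0 "ln 2"] assms by simp
  then show ?thesis by (simp add: powr_def algebra_simps)
qed

lemma log_ge_lin: fixes y :: real assumes "0 \<le> y" "y \<le> 1" shows "y \<le> log 2 (1 + y)"
  using le_log_iff[of 2 "1+y" y] two_powr_le[OF assms] assms by simp

lemma arith_key: fixes a b :: real assumes "1 \<le> a" "a \<le> b"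
  shows "a * log 2 a + b * log 2 b + 2 * a \<le> (a + b) * log 2 (a + b)"
proof -
  have h1: "1 + log 2 a \<le> log 2 (a + b)"
  proof -
    have "1 + log 2 a = log 2 (2 * a)" using assms by (simp add: log_mult)
    also have "\<dots> \<le> log 2 (a + b)" using assms by simp
    finally show ?thesis .
  qed
  have h2: "a / b \<le> log 2 (a + b) - log 2 b"
  proof -
    have "a / b \<le> log 2 (1 + a / b)" using assms by (intro log_ge_lin) auto
    also have "1 + a / b = (a + b) / b" using assms by (simp add: field_simps)
    also have "log 2 ((a + b) / b) = log 2 (a + b) - log 2 b" using assms by (simp add: log_divide)
    finally show ?thesis .
  qed
  have h3: "a \<le> b * (log 2 (a + b) - log 2 b)"
    using mult_left_mono[OF h2, of b] assms by (simp add: field_simps)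
  have "a * (1 + log 2 a) \<le> a * log 2 (a + b)" using mult_left_mono[OF h1, of a] assms by simp
  with h3 show ?thesis by (simp add: algebra_simps)
qed

definition ff :: "nat \<Rightarrow> real" where "ff n = real n * log 2 (real n)"

lemma ff_nonneg: "0 \<le> ff n"
  unfolding ff_def by (cases "n = 0") auto

lemma ff_split: assumes "1 \<le> a" "1 \<le> b" shows "ff a + ff b + 2 * real (min a b) \<le> ff (a + b)"
proof (cases "a \<le> b")
  case True
  then show ?thesis using arith_key[of "real a" "real b"] assms by (simp add: ff_def min_def)
next
  case False
  then show ?thesis using arith_key[of "real b" "real a"] assms by (simp add: ff_def min_def algebra_simps)
qed



lemma cube_bound:
  fixes V :: "'x set" and D :: "('x \<times> 't) set" and nxt :: "'x \<Rightarrow> 't \<Rightarrow> 'x"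
    and rv :: "'t \<Rightarrow> 't" and L :: "'x \<Rightarrow> 'c set"
  assumes finV: "finite V" and finD: "finite D" and injL: "inj_on L V"
    and DV: "\<And>x t. (x, t) \<in> D \<Longrightarrow> x \<in> V \<and> nxt x t \<in> V \<and> nxt x t \<noteq> x \<and>
         (nxt x t, rv t) \<in> D \<and> nxt (nxt x t) (rv t) = x \<and> rv (rv t) = t"
    and uniq: "\<And>x t t' e. (x, t) \<in> D \<Longrightarrow> (x, t') \<in> D \<Longrightarrow>
         (e \<in> L x) \<noteq> (e \<in> L (nxt x t)) \<Longrightarrow> (e \<in> L x) \<noteq> (e \<in> L (nxt x t')) \<Longrightarrow> t = t'"
  shows "real (card D) \<le> ff (card V)"
proof -
  define DW where "DW W = {(x, t). (x, t) \<in> D \<and> x \<in> W \<and> nxt x t \<in> W}" for W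
  have main: "W \<subseteq> V \<Longrightarrow> real (card (DW W)) \<le> ff (card W)" for W
  proof (induction "card W" arbitrary: W rule: less_induct)
    case less
    have finW: "finite W" using less.prems finV finite_subset by blast
    have finDW: "finite (DW W')" for W' using finD unfolding DW_def
      by (rule finite_subset[rotated]) auto
    show ?case
    proof (cases "card W \<le> 1")
      case True
      have "DW W = {}"
      proof (rule ccontr)
        assume "DW W \<noteq> {}"
        then obtain x t where xt: "(x, t) \<in> D" "x \<in> W" "nxt x t \<in> W" unfolding DW_def by auto
        have "{x, nxt x t} \<subseteq> W" using xt by auto
        hence "card {x, nxt x t} \<le> card W" using finW by (rule card_mono[rotated])
        moreover have "card {x, nxt x t} = 2" using DV[OF xt(1)] by auto
        ultimately show False using True by simp
      qed
      then show ?thesis using ff_nonneg by simp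
    next
      case False
      have "\<not> (\<forall>a\<in>W. \<forall>b\<in>W. a = b)" using False card_le_Suc0_iff_eq[OF finW] by simp
      then obtain x y where xy: "x \<in> W" "y \<in> W" "x \<noteq> y" by blast
      hence "L x \<noteq> L y" using injL less.prems by (meson inj_onD subsetD)
      then obtain e where e: "(e \<in> L x) \<noteq> (e \<in> L y)" by blast
      define W1 where "W1 = {z \<in> W. e \<in> L z}"
      define W2 where "W2 = {z \<in> W. e \<notin> L z}"
      have W12: "W1 \<subseteq> W" "W2 \<subseteq> W" "W1 \<inter> W2 = {}" "W1 \<union> W2 = W" unfolding W1_def W2_def by auto
      have ne: "W1 \<noteq> {}" "W2 \<noteq> {}" using e xy unfolding W1_def W2_def by auto
      have fin12: "finite W1" "finite W2" using W12 finW finite_subset by blast+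
      have cardW: "card W = card W1 + card W2"
        using card_Un_disjoint[OF fin12 W12(3)] W12(4) by simp
      have c1: "card W1 \<ge> 1" "card W2 \<ge> 1" using ne fin12 by (auto simp: Suc_le_eq card_gt_0_iff)
      have lt: "card W1 < card W" "card W2 < card W" using cardW c1 by auto
      have IH1: "real (card (DW W1)) \<le> ff (card W1)"
        using less.hyps[OF lt(1)] W12 less.prems by blast
      have IH2: "real (card (DW W2)) \<le> ff (card W2)"
        using less.hyps[OF lt(2)] W12 less.prems by blast
      define C12 where "C12 = {(x, t). (x, t) \<in> D \<and> x \<in> W1 \<and> nxt x t \<in> W2}"
      define C21 where "C21 = {(x, t). (x, t) \<in> D \<and> x \<in> W2 \<and> nxt x t \<in> W1}"
      have finC: "finite C12" "finite C21" unfolding C12_def C21_def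
        by (rule finite_subset[OF _ finD], auto)+
      have sub: "DW W \<subseteq> DW W1 \<union> DW W2 \<union> C12 \<union> C21"
        unfolding DW_def C12_def C21_def W1_def W2_def by auto
      have a1: "card C12 \<le> card W1"
      proof (rule card_inj_on_le[of fst])
        show "inj_on fst C12"
        proof (rule inj_onI)
          fix p q assume pq: "p \<in> C12" "q \<in> C12" "fst p = fst q"
          obtain x t where p: "p = (x, t)" by (cases p)
          obtain x' t' where q: "q = (x', t')" by (cases q)
          show "p = q" using pq uniq[of x t t' e] unfolding p q C12_def W1_def W2_def by auto
        qed
      qed (auto simp: C12_def fin12)
      have a2: "card C21 \<le> card W2"
      proof (rule card_inj_on_le[of fst])
        show "inj_on fst C21"
        proof (rule inj_onI)
          fix p q assume pq: "p \<in> C21" "q \<in> C21" "fst p = fst q"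
          obtain x t where p: "p = (x, t)" by (cases p)
          obtain x' t' where q: "q = (x', t')" by (cases q)
          show "p = q" using pq uniq[of x t t' e] unfolding p q C21_def W1_def W2_def by auto
        qed
      qed (auto simp: C21_def fin12)
      define g where "g p = (nxt (fst p) (snd p), rv (snd p))" for p
      have ginj: "inj_on g D"
      proof (rule inj_onI)
        fix p q assume pq: "p \<in> D" "q \<in> D" "g p = g q"
        obtain x t where p: "p = (x, t)" by (cases p)
        obtain x' t' where q: "q = (x', t')" by (cases q)
        have Dp: "(x, t) \<in> D" and Dq: "(x', t') \<in> D" using pq(1,2) p q by auto
        have "rv t = rv t'" using pq(3) unfolding p q g_def by simp
        moreover have "rv (rv t) = t" using DV[OF Dp] by blast
        moreover have "rv (rv t') = t'" using DV[OF Dq] by blast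
        ultimately have tt: "t = t'" by metis
        have n: "nxt x t = nxt x' t'" using pq(3) unfolding p q g_def by simp
        have b1: "nxt (nxt x t) (rv t) = x" using DV[OF Dp] by blast
        have b2: "nxt (nxt x' t') (rv t') = x'" using DV[OF Dq] by blast
        have "x = x'" using b1 b2 n tt by metis
        then show "p = q" using tt p q by simp
      qed
      have a3: "card C12 \<le> card C21"
      proof (rule card_inj_on_le[of g])
        show "inj_on g C12" by (rule inj_on_subset[OF ginj]) (auto simp: C12_def)
        show "g ` C12 \<subseteq> C21"
        proof
          fix q assume "q \<in> g ` C12"
          then obtain x t where xt: "(x, t) \<in> C12" "q = g (x, t)" by auto
          have d: "(x, t) \<in> D" "x \<in> W1" "nxt x t \<in> W2" using xt(1) unfolding C12_def by auto
          note DV[OF d(1)]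
          then show "q \<in> C21" using d xt(2) unfolding C21_def g_def by auto
        qed
      qed (rule finC)
      have a4: "card C21 \<le> card C12"
      proof (rule card_inj_on_le[of g])
        show "inj_on g C21" by (rule inj_on_subset[OF ginj]) (auto simp: C21_def)
        show "g ` C21 \<subseteq> C12"
        proof
          fix q assume "q \<in> g ` C21"
          then obtain x t where xt: "(x, t) \<in> C21" "q = g (x, t)" by auto
          have d: "(x, t) \<in> D" "x \<in> W2" "nxt x t \<in> W1" using xt(1) unfolding C21_def by auto
          note DV[OF d(1)]
          then show "q \<in> C12" using d xt(2) unfolding C12_def g_def by auto
        qed
      qed (rule finC)
      have "card (DW W) \<le> card (DW W1 \<union> DW W2 \<union> C12 \<union> C21)"
        using sub by (rule card_mono[rotated]) (simp add: finDW finC)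
      also have "\<dots> \<le> card (DW W1) + card (DW W2) + card C12 + card C21"
        by (meson add_le_mono card_Un_le le_trans order_refl)
      finally have "real (card (DW W)) \<le> real (card (DW W1)) + real (card (DW W2)) + 2 * real (min (card W1) (card W2))"
        using a1 a2 a3 a4 by (simp add: min_def)
      also have "\<dots> \<le> ff (card W1) + ff (card W2) + 2 * real (min (card W1) (card W2))"
        using IH1 IH2 by simp
      also have "\<dots> \<le> ff (card W)" using ff_split[OF c1] cardW by simp
      finally show ?thesis .
    qed
  qed
  have "DW V = D" unfolding DW_def using DV by auto
  then show ?thesis using main[of V] by simp
qed



locale med =
  fixes St :: "'a set" and T :: "'b set" and act :: "'a \<Rightarrow> 'b \<Rightarrow> 'a"
  assumes M: "medium St T act"
begin

abbreviation rv where "rv t \<equiv> tok_rev St T act t"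
abbreviation am where "am P w \<equiv> apply_msg act P w"
abbreviation se where "se P w \<equiv> stepwise_effective act P w"
abbreviation cons where "cons w \<equiv> consistent_msg St T act w"
definition conc where "conc P w \<longleftrightarrow> set w \<subseteq> T \<and> se P w \<and> cons w"

lemmas MM = M[unfolded medium_def]
lemma finSt: "finite St" using conjunct1[OF MM] .
lemma closed: "P \<in> St \<Longrightarrow> t \<in> T \<Longrightarrow> act P t \<in> St"
  using conjunct1[OF conjunct2[OF MM]] by blast
lemma ax1: "t \<in> T \<Longrightarrow> \<exists>!r. r \<in> T \<and> is_reverse St act t r"
  using conjunct1[OF conjunct2[OF conjunct2[OF MM]]] by (rule bspec)
lemma ax2: "P \<in> St \<Longrightarrow> Q \<in> St \<Longrightarrow> P \<noteq> Q \<Longrightarrow> \<exists>w. set w \<subseteq> T \<and> cons w \<and> am P w = Q"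
  using conjunct1[OF conjunct2[OF conjunct2[OF conjunct2[OF MM]]]] by blast
lemma ax3: "P \<in> St \<Longrightarrow> set w \<subseteq> T \<Longrightarrow> se P w \<Longrightarrow> am P w = P \<Longrightarrow> vacuous_msg St T act w"
  using conjunct1[OF conjunct2[OF conjunct2[OF conjunct2[OF conjunct2[OF MM]]]]] by blast
lemma ax4: "P \<in> St \<Longrightarrow> Q \<in> St \<Longrightarrow> set w \<subseteq> T \<Longrightarrow> set z \<subseteq> T \<Longrightarrow> am P w = am Q z \<Longrightarrow>
   se P w \<Longrightarrow> se Q z \<Longrightarrow> cons w \<Longrightarrow> cons z \<Longrightarrow> cons (w @ z)"
  using conjunct2[OF conjunct2[OF conjunct2[OF conjunct2[OF conjunct2[OF MM]]]]] by blast

lemma rv_prop: "t \<in> T \<Longrightarrow> rv t \<in> T \<and> is_reverse St act t (rv t)"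
  unfolding tok_rev_def by (rule theI'[OF ax1])

lemma rev_sym: assumes a: "is_reverse St act t r" shows "is_reverse St act r t"
  unfolding is_reverse_def
proof (intro ballI impI)
  fix P Q assume h: "P \<in> St" "Q \<in> St" "P \<noteq> Q"
  have "(act Q t = P) = (act P r = Q)"
    using a[unfolded is_reverse_def, rule_format, of Q P] h by simp
  then show "(act P r = Q) = (act Q t = P)" by simp
qed

lemma rv_rv: "t \<in> T \<Longrightarrow> rv (rv t) = t"
proof -
  assume t: "t \<in> T"
  have r1: "rv t \<in> T" by (rule conjunct1[OF rv_prop[OF t]])
  have r2: "is_reverse St act (rv t) t" by (rule rev_sym[OF conjunct2[OF rv_prop[OF t]]])
  note r = r1 r2
  have a: "rv (rv t) \<in> T \<and> is_reverse St act (rv t) (rv (rv t))" using rv_prop[OF r(1)] .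
  from ax1[OF r(1)] obtain r0 where h1: "r0 \<in> T \<and> is_reverse St act (rv t) r0"
    and h2: "\<forall>y. y \<in> T \<and> is_reverse St act (rv t) y \<longrightarrow> y = r0" by (rule ex1E)
  have e1: "rv (rv t) = r0" using h2[rule_format, OF a] .
  have e2: "t = r0" using h2[rule_format, OF conjI[OF t r(2)]] .
  show ?thesis by (rule trans[OF e1 e2[symmetric]])
qed

lemma rv_T: "t \<in> T \<Longrightarrow> rv t \<in> T" using rv_prop by simp

lemma rv_inj: assumes "t \<in> T" "t' \<in> T" "rv t = rv t'" shows "t = t'"
proof -
  have "rv (rv t) = rv (rv t')" using assms(3) by simp
  then show ?thesis using rv_rv[OF assms(1)] rv_rv[OF assms(2)] by simp
qed

lemma rvback: assumes "P \<in> St" "t \<in> T" "act P t \<noteq> P" shows "act (act P t) (rv t) = P"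
proof -
  have r: "is_reverse St act t (rv t)" using rv_prop[OF assms(2)] by blast
  have c: "act P t \<in> St" using closed assms by blast
  show ?thesis using r[unfolded is_reverse_def, rule_format, of P "act P t"] assms c by simp
qed

lemma am_simps[simp]: "am P [] = P" "am P (t # w) = am (act P t) w" "am P (a @ b) = am (am P a) b"
  unfolding apply_msg_def by simp_all

lemma am_St: "P \<in> St \<Longrightarrow> set w \<subseteq> T \<Longrightarrow> am P w \<in> St"
  by (induction w arbitrary: P) (auto simp: closed)

lemma se_append[simp]: "se P (a @ b) = (se P a \<and> se (am P a) b)"
  by (induction a arbitrary: P) auto

lemma cons_mono: "set v \<subseteq> set w \<Longrightarrow> cons w \<Longrightarrow> cons v"
  unfolding consistent_msg_def by blast

fun effil :: "'a \<Rightarrow> 'b list \<Rightarrow> 'b list" where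
  "effil P [] = []"
| "effil P (t # w) = (if act P t = P then effil P w else t # effil (act P t) w)"

lemma effil: "am P (effil P w) = am P w \<and> se P (effil P w) \<and> set (effil P w) \<subseteq> set w"
  by (induction w arbitrary: P) auto

lemma exists_conc: assumes "P \<in> St" "Q \<in> St" shows "\<exists>w. conc P w \<and> am P w = Q"
proof (cases "P = Q")
  case True
  then show ?thesis by (intro exI[of _ "[]"]) (auto simp: conc_def consistent_msg_def)
next
  case False
  then obtain w where w: "set w \<subseteq> T" "cons w" "am P w = Q" using ax2 assms by blast
  show ?thesis
    by (rule exI[of _ "effil P w"]) (use effil[of P w] w cons_mono in \<open>auto simp: conc_def\<close>)
qed

definition rmsg where "rmsg w = rev (map rv w)"

lemma rmsg: "P \<in> St \<Longrightarrow> set w \<subseteq> T \<Longrightarrow> se P w \<Longrightarrow> se (am P w) (rmsg w) \<and> am (am P w) (rmsg w) = P"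
proof (induction w arbitrary: P)
  case Nil
  then show ?case by (simp add: rmsg_def)
next
  case (Cons t w)
  let ?P1 = "act P t"
  have t: "t \<in> T" "?P1 \<noteq> P" using Cons.prems by auto
  have P1: "?P1 \<in> St" using closed Cons.prems t by blast
  have IH: "se (am ?P1 w) (rmsg w) \<and> am (am ?P1 w) (rmsg w) = ?P1"
    using Cons.IH[OF P1] Cons.prems by auto
  have bk: "act ?P1 (rv t) = P" using rvback Cons.prems t by blast
  have "rmsg (t # w) = rmsg w @ [rv t]" by (simp add: rmsg_def)
  then show ?case using IH bk t by simp
qed

lemma rmsg_set: "set w \<subseteq> T \<Longrightarrow> set (rmsg w) \<subseteq> T"
  unfolding rmsg_def using rv_T by auto

lemma count_rmsg: "u \<in> T \<Longrightarrow> set w \<subseteq> T \<Longrightarrow> count_list (rmsg w) u = count_list w (rv u)"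
proof (induction w)
  case Nil
  then show ?case by (simp add: rmsg_def)
next
  case (Cons x w)
  have "(rv x = u) = (x = rv u)" using Cons.prems rv_rv by auto
  then show ?case using Cons by (simp add: rmsg_def)
qed

lemma vac: "P \<in> St \<Longrightarrow> set w \<subseteq> T \<Longrightarrow> se P w \<Longrightarrow> am P w = P \<Longrightarrow> u \<in> T \<Longrightarrow>
   count_list w u = count_list w (rv u)"
  using ax3 unfolding vacuous_msg_def by blast

lemma cons_no: "cons w \<Longrightarrow> u \<in> set w \<Longrightarrow> rv u \<notin> set w"
  unfolding consistent_msg_def by blast

lemma not_self_rev: assumes P: "P \<in> St" and t: "t \<in> T" and eff: "act P t \<noteq> P" shows "rv t \<noteq> t"
proof
  assume rt: "rv t = t"
  let ?Q = "act P t"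
  have Q: "?Q \<in> St" using closed P t by blast
  obtain w where w: "conc P w" "am P w = ?Q" using exists_conc[OF P Q] by blast
  have bk: "act ?Q t = P" using rvback[OF P t eff] rt by simp
  have m: "se P (w @ [t])" "am P (w @ [t]) = P" "set (w @ [t]) \<subseteq> T"
    using w bk eff t unfolding conc_def by auto
  have "w \<noteq> []" using w eff by auto
  then obtain u where u: "u \<in> set w" by (cases w) auto
  have uT: "u \<in> T" using u w unfolding conc_def by auto
  have c: "count_list (w @ [t]) u = count_list (w @ [t]) (rv u)" using vac[OF P m(3) m(1) m(2) uT] .
  have nrv: "rv u \<notin> set w" using cons_no u w unfolding conc_def by blast
  have c1: "count_list w u \<ge> 1" using u count_list_0_iff[of w u] by simp
  have tr: "t = rv u"
  proof (rule ccontr)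
    assume "t \<noteq> rv u"
    then have "count_list (w @ [t]) (rv u) = 0" using nrv by simp
    with c have "count_list (w @ [t]) u = 0" by simp
    with u show False by (simp add: count_list_0_iff)
  qed
  have tu: "t \<noteq> u"
  proof
    assume tu: "t = u"
    have A: "count_list (w @ [t]) u \<ge> 2" using c1 tu by simp
    have B: "count_list (w @ [t]) (rv u) \<le> 1" using nrv by simp
    show False using c A B by simp
  qed
  have "u = rv t" using rv_rv[OF uT] tr by simp
  with rt tu have False by simp
  then show False .
qed

lemma not_both: assumes P: "P \<in> St" and t: "t \<in> T" and e1: "act P t \<noteq> P" and e2: "act P (rv t) \<noteq> P"
  shows False
proof -
  let ?Q = "act P t" and ?R = "act P (rv t)"
  have rT: "rv t \<in> T" using rv_T t by blast
  have QR: "?Q \<in> St" "?R \<in> St" using closed P t rT by auto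
  have b1: "act ?Q (rv t) = P" using rvback[OF P t e1] .
  have b2: "act ?R t = P" using rvback[OF P rT e2] rv_rv[OF t] by simp
  have nr: "rv t \<noteq> t" using not_self_rev[OF P t e1] .
  have c1: "cons [rv t]" using nr rv_rv[OF t] unfolding consistent_msg_def by auto
  have c2: "cons [t]" using nr unfolding consistent_msg_def by auto
  have "cons ([rv t] @ [t])"
    by (rule ax4[OF QR(1) QR(2)]) (use b1 b2 e1 e2 c1 c2 t rT in auto)
  then show False using rv_rv[OF t] unfolding consistent_msg_def by auto
qed

lemma conc_distinct: assumes P: "P \<in> St" and c: "conc P w" shows "distinct w"
proof (rule ccontr)
  assume "\<not> distinct w"
  then obtain a b c' t where w: "w = a @ [t] @ b @ [t] @ c'" using not_distinct_decomp by blast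
  have wT: "set w \<subseteq> T" and sew: "se P w" and cw: "cons w" using c unfolding conc_def by auto
  define S1 where "S1 = am P a"
  define S3 where "S3 = am (act S1 t) b"
  have tT: "t \<in> T" using wT w by auto
  have S1: "S1 \<in> St" unfolding S1_def using am_St P wT w by auto
  have S3: "S3 \<in> St" unfolding S3_def using am_St closed[OF S1 tT] wT w by auto
  have se1: "se S1 (t # b)" and e3: "act S3 t \<noteq> S3" using sew unfolding w S1_def S3_def by auto
  have S4: "act S3 t \<in> St" using closed S3 tT by blast
  have bk: "act (act S3 t) (rv t) = S3" using rvback[OF S3 tT e3] .
  have nr: "rv t \<noteq> t" using not_self_rev[OF S3 tT e3] .
  have c1: "cons (t # b)" by (rule cons_mono[OF _ cw]) (auto simp: w)
  have c2: "cons [rv t]" using nr rv_rv[OF tT] unfolding consistent_msg_def by auto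
  have "cons ((t # b) @ [rv t])"
    by (rule ax4[OF S1 S4]) (use wT w bk e3 se1 c1 c2 rv_T[OF tT] S3_def in auto)
  then show False unfolding consistent_msg_def by auto
qed

lemma count_distinct: "distinct w \<Longrightarrow> count_list w u = (if u \<in> set w then 1 else 0)"
  by (induction w) auto

end



context med
begin

definition path where "path P0 S = (SOME w. conc P0 w \<and> am P0 w = S)"
definition lab where "lab P0 S = set (path P0 S)"

lemma path: "P0 \<in> St \<Longrightarrow> S \<in> St \<Longrightarrow> conc P0 (path P0 S) \<and> am P0 (path P0 S) = S"
  unfolding path_def by (rule someI_ex[OF exists_conc])

lemma loop_count:
  assumes P0: "P0 \<in> St" and S: "S \<in> St" and Q: "Q \<in> St"
    and v: "set v \<subseteq> T" "se S v" "am S v = Q" and uT: "u \<in> T"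
  shows "count_list (path P0 S) u + count_list v u + count_list (path P0 Q) (rv u)
       = count_list (path P0 S) (rv u) + count_list v (rv u) + count_list (path P0 Q) u"
proof -
  let ?w = "path P0 S" and ?z = "path P0 Q"
  have w: "conc P0 ?w" "am P0 ?w = S" using path[OF P0 S] by auto
  have z: "conc P0 ?z" "am P0 ?z = Q" using path[OF P0 Q] by auto
  have zr: "se Q (rmsg ?z) \<and> am Q (rmsg ?z) = P0"
    using rmsg[OF P0, of ?z] z unfolding conc_def by auto
  let ?m = "?w @ v @ rmsg ?z"
  have m: "set ?m \<subseteq> T" "se P0 ?m" "am P0 ?m = P0"
    using w z zr v rmsg_set[of ?z] unfolding conc_def by auto
  have rT: "rv u \<in> T" using rv_T[OF uT] .
  have zT: "set ?z \<subseteq> T" using z unfolding conc_def by auto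
  have "count_list ?m u = count_list ?m (rv u)" using vac[OF P0 m uT] .
  moreover have "count_list (rmsg ?z) u = count_list ?z (rv u)" using count_rmsg[OF uT zT] .
  moreover have "count_list (rmsg ?z) (rv u) = count_list ?z u"
    using count_rmsg[OF rT zT] rv_rv[OF uT] by simp
  ultimately show ?thesis by simp
qed

lemma crossing:
  assumes P0: "P0 \<in> St" and S: "S \<in> St" and t: "t \<in> T" and eff: "act S t \<noteq> S"
    and e: "(e \<in> lab P0 S) \<noteq> (e \<in> lab P0 (act S t))"
  shows "e = t \<or> e = rv t"
proof (rule ccontr)
  assume ne: "\<not> (e = t \<or> e = rv t)"
  let ?Q = "act S t"
  have Q: "?Q \<in> St" using closed S t by blast
  let ?w = "path P0 S" and ?z = "path P0 ?Q"
  have w: "conc P0 ?w" using path[OF P0 S] by auto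
  have z: "conc P0 ?z" using path[OF P0 Q] by auto
  have eT: "e \<in> T" using e w z unfolding lab_def conc_def by auto
  have lc: "count_list ?w e + count_list [t] e + count_list ?z (rv e)
       = count_list ?w (rv e) + count_list [t] (rv e) + count_list ?z e"
    by (rule loop_count[OF P0 S Q _ _ _ eT]) (use t eff in auto)
  have t1: "count_list [t] e = 0" using ne by auto
  have "t \<noteq> rv e" using ne rv_rv[OF eT] by auto
  hence t2: "count_list [t] (rv e) = 0" by simp
  have lc2: "count_list ?w e + count_list ?z (rv e) = count_list ?w (rv e) + count_list ?z e"
    using lc t1 t2 by simp
  show False
  proof (cases "e \<in> set ?w")
    case True
    hence "e \<notin> set ?z" using e unfolding lab_def by auto
    hence "count_list ?z e = 0" by simp
    moreover have "count_list ?w (rv e) = 0" using cons_no[OF _ True] w unfolding conc_def by simp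
    moreover have "count_list ?w e \<noteq> 0" using True by (simp add: count_list_0_iff)
    ultimately show False using lc2 by simp
  next
    case False
    hence ez: "e \<in> set ?z" using e unfolding lab_def by auto
    have "count_list ?w e = 0" using False by simp
    moreover have "count_list ?z (rv e) = 0" using cons_no[OF _ ez] z unfolding conc_def by simp
    moreover have "count_list ?z e \<noteq> 0" using ez by (simp add: count_list_0_iff)
    ultimately show False using lc2 by simp
  qed
qed

lemma lab_inj: assumes P0: "P0 \<in> St" shows "inj_on (lab P0) St"
proof (rule inj_onI, rule ccontr)
  fix S Q assume S: "S \<in> St" and Q: "Q \<in> St" and eq: "lab P0 S = lab P0 Q" and ne: "S \<noteq> Q"
  obtain v where v: "conc S v" "am S v = Q" using exists_conc[OF S Q] by blast
  have "v \<noteq> []" using v ne by auto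
  then obtain u where u: "u \<in> set v" by (cases v) auto
  have vT: "set v \<subseteq> T" using v unfolding conc_def by auto
  have uT: "u \<in> T" using u vT by auto
  let ?w = "path P0 S" and ?z = "path P0 Q"
  have w: "conc P0 ?w" using path[OF P0 S] by auto
  have z: "conc P0 ?z" using path[OF P0 Q] by auto
  have dw: "distinct ?w" using conc_distinct[OF P0 w] .
  have dz: "distinct ?z" using conc_distinct[OF P0 z] .
  have sw: "set ?w = set ?z" using eq unfolding lab_def .
  have lc: "count_list ?w u + count_list v u + count_list ?z (rv u)
       = count_list ?w (rv u) + count_list v (rv u) + count_list ?z u"
    by (rule loop_count[OF P0 S Q vT _ v(2) uT]) (use v in \<open>auto simp: conc_def\<close>)
  have cv0: "count_list v (rv u) = 0" using cons_no[OF _ u] v unfolding conc_def by simp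
  have cv1: "count_list v u \<noteq> 0" using u by (simp add: count_list_0_iff)
  have cw: "count_list ?w x = (if x \<in> set ?w then 1 else 0)" for x using count_distinct[OF dw] .
  have cz: "count_list ?z x = (if x \<in> set ?w then 1 else 0)" for x using count_distinct[OF dz] sw by simp
  show False
  proof (cases "u \<in> set ?w")
    case True
    have "rv u \<notin> set ?w" using cons_no[OF _ True] w unfolding conc_def by simp
    then show False using lc cv0 cv1 cw[of u] cz[of u] cw[of "rv u"] cz[of "rv u"] True by simp
  next
    case False
    then show False using lc cv0 cv1 cw[of u] cz[of u] cw[of "rv u"] cz[of "rv u"] by simp
  qed
qed

lemma bound_nonempty: assumes P0: "P0 \<in> St" and fin: "finite (effective_transitions St T act)"
  shows "real (card (effective_transitions St T act)) \<le> ff (card St)"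
proof (rule cube_bound[where nxt = act and rv = rv and L = "lab P0"])
  show "finite St" by (rule finSt)
  show "finite (effective_transitions St T act)" by (rule fin)
  show "inj_on (lab P0) St" by (rule lab_inj[OF P0])
next
  fix x t assume xt: "(x, t) \<in> effective_transitions St T act"
  hence x: "x \<in> St" "t \<in> T" "act x t \<noteq> x" unfolding effective_transitions_def by auto
  have Q: "act x t \<in> St" using closed x by blast
  have bk: "act (act x t) (rv t) = x" using rvback x by blast
  have rT: "rv t \<in> T" using rv_T x by blast
  have "(act x t, rv t) \<in> effective_transitions St T act"
    unfolding effective_transitions_def using Q rT bk x by auto
  then show "x \<in> St \<and> act x t \<in> St \<and> act x t \<noteq> x \<and> (act x t, rv t) \<in> effective_transitions St T act \<and>
      act (act x t) (rv t) = x \<and> rv (rv t) = t" using x Q bk rv_rv[OF x(2)] by auto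
next
  fix x t t' e
  assume xt: "(x, t) \<in> effective_transitions St T act" and xt': "(x, t') \<in> effective_transitions St T act"
    and c1: "(e \<in> lab P0 x) \<noteq> (e \<in> lab P0 (act x t))" and c2: "(e \<in> lab P0 x) \<noteq> (e \<in> lab P0 (act x t'))"
  have x: "x \<in> St" "t \<in> T" "act x t \<noteq> x" using xt unfolding effective_transitions_def by auto
  have x': "t' \<in> T" "act x t' \<noteq> x" using xt' unfolding effective_transitions_def by auto
  have e1: "e = t \<or> e = rv t" using crossing[OF P0 x c1] .
  have e2: "e = t' \<or> e = rv t'" using crossing[OF P0 x(1) x'(1) x'(2) c2] .
  show "t = t'"
  proof (rule ccontr)
    assume ne: "t \<noteq> t'"
    have "t' = rv t"
      using e1 e2 ne rv_rv[OF x(2)] rv_rv[OF x'(1)] rv_inj[OF x(2) x'(1)] by auto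
    then show False using not_both[OF x(1) x(2) x(3)] x'(2) by simp
  qed
qed

end

theorem mainTheorem1:
  fixes St :: "'a set" and T :: "'b set" and act :: "'a \<Rightarrow> 'b \<Rightarrow> 'a"
  assumes "medium St T act"
  shows "real (card (effective_transitions St T act)) \<le> real (card St) * log 2 (real (card St))"
proof -
  interpret med St T act by (rule med.intro[OF assms])
  show ?thesis
  proof (cases "St = {} \<or> infinite (effective_transitions St T act)")
    case True
    have "card (effective_transitions St T act) = 0"
      using True unfolding effective_transitions_def by auto
    then show ?thesis using ff_nonneg[of "card St"] unfolding ff_def by simp
  next
    case False
    then obtain P0 where "P0 \<in> St" by auto
    then show ?thesis using bound_nonempty False unfolding ff_def by blast
  qed
qed

end
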